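(* The normalizer of $\operatorname{PC}^{+}$ in $\operatorname{PC}^{\bowtie}$ is $\operatorname{PC}^{\pm}$.
   Context: $X=[0,1[$. $\widehat{\operatorname{PC}^{\bowtie}}$ is the group of bijections $X\to X$ continuous outside a finite subset; $\widehat{\operatorname{PC}^{+}}$ is the subgroup of those $h$ for which there is a finite partition of $X$ into intervals $[a,b[$ with $h$ continuous and increasing on each $]a,b[$. With ${\mathfrak S}_{\mathrm{fin}}$ the normal subgroup of finitely supported permutations, $\operatorname{PC}^{\bowtie}=\widehat{\operatorname{PC}^{\bowtie}}/{\mathfrak S}_{\mathrm{fin}}$ and $\operatorname{PC}^{+}=\widehat{\operatorname{PC}^{+}}/{\mathfrak S}_{\mathrm{fin}}$. Let $\mathcal R\in\operatorname{PC}^{\bowtie}$ be the class of any bijection of $X$ agreeing with $x\mapsto 1-x$ outside a finite set. Define $\operatorname{PC}^{-}=\mathcal R\cdot\operatorname{PC}^{+}$ and $\operatorname{PC}^{\pm}=\operatorname{PC}^{+}\cup\operatorname{PC}^{-}$ (a subgroup). *)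

theory Defs
  imports "HOL-Analysis.Analysis"
begin

definition Xint :: "real set" where
  "Xint = {0..<1}"

text \<open>Hat PC-bowtie: bijections of X continuous (as maps X to X) outside a finite subset.
  Functions are real-valued functions; only their values on X matter.\<close>
definition PCbowtie_hat :: "(real \<Rightarrow> real) set" where
  "PCbowtie_hat = {f. bij_betw f Xint Xint \<and>
     (\<exists>F. finite F \<and> (\<forall>x \<in> Xint - F. continuous (at x within Xint) f))}"

definition PCplus_hat :: "(real \<Rightarrow> real) set" where
  "PCplus_hat = {f. bij_betw f Xint Xint \<and>
     (\<exists>(n::nat) (t::nat \<Rightarrow> real). t 0 = 0 \<and> t n = 1 \<and> (\<forall>i<n. t i < t (Suc i)) \<and>
        (\<forall>i<n. continuous_on {t i<..<t (Suc i)} f \<and> strict_mono_on {t i<..<t (Suc i)} f))}"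

text \<open>Equality modulo finitely supported permutations: agreement on X outside a finite set.
  Two bijections of X define the same element of the quotient iff they are related.\<close>
definition fin_eq :: "(real \<Rightarrow> real) \<Rightarrow> (real \<Rightarrow> real) \<Rightarrow> bool" where
  "fin_eq f g \<longleftrightarrow> finite {x \<in> Xint. f x \<noteq> g x}"

definition invX :: "(real \<Rightarrow> real) \<Rightarrow> (real \<Rightarrow> real)" where
  "invX g = the_inv_into Xint g"

definition in_PCplus :: "(real \<Rightarrow> real) \<Rightarrow> bool" where
  "in_PCplus g \<longleftrightarrow> (\<exists>h \<in> PCplus_hat. fin_eq g h)"

text \<open>Class of g lies in PC-minus = R . PC-plus, where R is the class of any bijection
  of X agreeing with x |-> 1 - x outside a finite set.\<close>
definition in_PCminus :: "(real \<Rightarrow> real) \<Rightarrow> bool" where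
  "in_PCminus g \<longleftrightarrow> (\<exists>r \<in> PCbowtie_hat. \<exists>h \<in> PCplus_hat.
      fin_eq r (\<lambda>x. 1 - x) \<and> fin_eq g (r \<circ> h))"

definition in_PCpm :: "(real \<Rightarrow> real) \<Rightarrow> bool" where
  "in_PCpm g \<longleftrightarrow> in_PCplus g \<or> in_PCminus g"

text \<open>Class of g (g in hat PC-bowtie) normalizes PC-plus: [g] PC+ [g]^-1 = PC+,
  i.e. both [g] PC+ [g]^-1 and [g]^-1 PC+ [g] are contained in PC+.\<close>
definition normalizes_PCplus :: "(real \<Rightarrow> real) \<Rightarrow> bool" where
  "normalizes_PCplus g \<longleftrightarrow>
     (\<forall>h \<in> PCplus_hat. in_PCplus (g \<circ> h \<circ> invX g) \<and> in_PCplus (invX g \<circ> h \<circ> g))"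

end

theory Submission
  imports Defs
begin


definition r0 :: "real \<Rightarrow> real" where "r0 x = (if x = 0 then 0 else 1 - x)"

definition pcinc :: "real set \<Rightarrow> (real \<Rightarrow> real) \<Rightarrow> bool" where
 "pcinc S f \<longleftrightarrow> finite S \<and> (\<forall>a b. 0 \<le> a \<longrightarrow> b \<le> 1 \<longrightarrow> {a<..<b} \<inter> S = {} \<longrightarrow>
     continuous_on {a<..<b} f \<and> strict_mono_on {a<..<b} f)"

lemma avoid_nbhd:
  fixes x :: real assumes "finite S" "x \<notin> S" "0 < x" "x < 1"
  shows "\<exists>e>0. 0 \<le> x - e \<and> x + e \<le> 1 \<and> {x-e<..<x+e} \<inter> S = {}"
proof -
  obtain d where d: "d > 0" "\<forall>s\<in>S. s \<noteq> x \<longrightarrow> d \<le> dist x s"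
    using finite_set_avoid[OF assms(1)] by blast
  define e where "e = min d (min x (1 - x))"
  have "e > 0" using d assms by (simp add: e_def)
  moreover have "{x-e<..<x+e} \<inter> S = {}"
  proof (rule ccontr)
    assume "{x-e<..<x+e} \<inter> S \<noteq> {}"
    then obtain s where s: "s \<in> S" "x - e < s" "s < x + e" by auto
    then have "s \<noteq> x" using assms by auto
    with d s have "d \<le> \<bar>x - s\<bar>" by (auto simp: dist_real_def)
    moreover have "\<bar>x - s\<bar> < e" using s by auto
    ultimately show False by (simp add: e_def)
  qed
  ultimately show ?thesis by (intro exI[of _ e]) (auto simp: e_def)
qed

lemma avoid_subint:
  fixes a b :: real assumes "finite B" "a < b"
  shows "\<exists>p q. a \<le> p \<and> p < q \<and> q \<le> b \<and> {p<..<q} \<inter> B = {}"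
proof -
  have "infinite ({a<..<b} - B)" using infinite_Ioo[OF assms(2)] assms(1) by auto
  then obtain m where m: "m \<in> {a<..<b}" "m \<notin> B"
    by (metis Diff_iff finite.emptyI equals0I)
  obtain d where d: "d > 0" "\<forall>s\<in>B. s \<noteq> m \<longrightarrow> d \<le> dist m s"
    using finite_set_avoid[OF assms(1)] by blast
  define p where "p = max a (m - d)"
  define q where "q = min b (m + d)"
  have "{p<..<q} \<inter> B = {}"
  proof (rule ccontr)
    assume "{p<..<q} \<inter> B \<noteq> {}"
    then obtain s where s: "s \<in> B" "p < s" "s < q" by auto
    then have "s \<noteq> m" using m by auto
    with d s have "d \<le> \<bar>m - s\<bar>" by (auto simp: dist_real_def)
    moreover have "\<bar>m - s\<bar> < d" using s by (auto simp: p_def q_def)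
    ultimately show False by simp
  qed
  moreover have "a \<le> p" "p < q" "q \<le> b" using m d by (auto simp: p_def q_def)
  ultimately show ?thesis by blast
qed

lemma fin_eq_refl: "fin_eq f f" by (simp add: fin_eq_def)
lemma fin_eq_sym: "fin_eq f g \<Longrightarrow> fin_eq g f"
proof -
  assume "fin_eq f g"
  moreover have "{x \<in> Xint. g x \<noteq> f x} = {x \<in> Xint. f x \<noteq> g x}" by auto
  ultimately show ?thesis unfolding fin_eq_def by simp
qed
lemma fin_eq_trans: "fin_eq f g \<Longrightarrow> fin_eq g h \<Longrightarrow> fin_eq f h"
  unfolding fin_eq_def
  by (rule finite_subset[of _ "{x \<in> Xint. f x \<noteq> g x} \<union> {x \<in> Xint. g x \<noteq> h x}"]) auto
lemma fin_eq_onX: assumes "\<And>x. x \<in> Xint \<Longrightarrow> f x = g x" shows "fin_eq f g"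
proof -
  have "{x \<in> Xint. f x \<noteq> g x} = {}" using assms by auto
  thus ?thesis unfolding fin_eq_def by (metis finite.emptyI)
qed

lemma fin_eq_comp:
  assumes "fin_eq f f'" "fin_eq k k'" "inj_on k' Xint" "k' ` Xint \<subseteq> Xint"
  shows "fin_eq (f \<circ> k) (f' \<circ> k')"
proof -
  have "{x \<in> Xint. (f \<circ> k) x \<noteq> (f' \<circ> k') x} \<subseteq>
     {x \<in> Xint. k x \<noteq> k' x} \<union> (k' -` {y \<in> Xint. f y \<noteq> f' y} \<inter> Xint)"
    using assms(4) by auto
  moreover have "finite (k' -` {y \<in> Xint. f y \<noteq> f' y} \<inter> Xint)"
    using assms(1,3) by (intro finite_vimage_IntI) (auto simp: fin_eq_def)
  ultimately show ?thesis using assms(2) unfolding fin_eq_def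
    by (meson finite_UnI finite_subset)
qed

lemma invX_f: "bij_betw f Xint Xint \<Longrightarrow> x \<in> Xint \<Longrightarrow> invX f (f x) = x"
  unfolding invX_def by (simp add: bij_betw_def the_inv_into_f_f)
lemma f_invX: "bij_betw f Xint Xint \<Longrightarrow> y \<in> Xint \<Longrightarrow> f (invX f y) = y"
  unfolding invX_def by (simp add: bij_betw_def f_the_inv_into_f)
lemma invX_bij: "bij_betw f Xint Xint \<Longrightarrow> bij_betw (invX f) Xint Xint"
  unfolding invX_def by (rule bij_betw_the_inv_into)
lemma invX_in: "bij_betw f Xint Xint \<Longrightarrow> y \<in> Xint \<Longrightarrow> invX f y \<in> Xint"
  using invX_bij bij_betwE by blast

lemma fin_eq_invX:
  assumes "bij_betw f Xint Xint" "bij_betw f' Xint Xint" "fin_eq f f'"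
  shows "fin_eq (invX f) (invX f')"
proof -
  have "{y \<in> Xint. invX f y \<noteq> invX f' y} \<subseteq> f ` {x \<in> Xint. f x \<noteq> f' x}"
  proof
    fix y assume y: "y \<in> {y \<in> Xint. invX f y \<noteq> invX f' y}"
    let ?x = "invX f y"
    have x: "?x \<in> Xint" "f ?x = y" using y assms invX_in f_invX by auto
    have "f' ?x \<noteq> f ?x"
    proof
      assume "f' ?x = f ?x"
      then have "invX f' y = ?x" using x invX_f[OF assms(2)] by metis
      then show False using y by simp
    qed
    then show "y \<in> f ` {x \<in> Xint. f x \<noteq> f' x}" using x by force
  qed
  then show ?thesis using assms(3) unfolding fin_eq_def by (meson finite_imageI finite_subset)
qed

lemma invX_comp:
  assumes "bij_betw f Xint Xint" "bij_betw k Xint Xint" "y \<in> Xint"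
  shows "invX (f \<circ> k) y = invX k (invX f y)"
proof -
  have b: "bij_betw (f \<circ> k) Xint Xint" using assms bij_betw_trans by blast
  have z: "invX f y \<in> Xint" using invX_in assms by blast
  have "(f \<circ> k) (invX k (invX f y)) = y"
    using f_invX[OF assms(2) z] f_invX[OF assms(1,3)] by simp
  then show ?thesis using invX_f[OF b] invX_in assms by metis
qed



lemma convex_lt:
  fixes a p r t :: real
  assumes "a < p" "a < r" "0 \<le> t" "t \<le> 1"
  shows "a < (1-t)*p + t*r"
proof (cases "t = 0")
  case True then show ?thesis using assms by simp
next
  case False
  then have "t*a < t*r" using assms by simp
  moreover have "(1-t)*a \<le> (1-t)*p" using assms by (intro mult_left_mono) auto
  ultimately show ?thesis by (simp add: algebra_simps)
qed

lemma convex_gt: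
  fixes b p r t :: real
  assumes "p < b" "r < b" "0 \<le> t" "t \<le> 1"
  shows "(1-t)*p + t*r < b"
  using convex_lt[of "-b" "-p" "-r" t] assms by (simp add: algebra_simps)

lemma convex_lt2:
  fixes p q r s t :: real
  assumes "p < q" "r < s" "0 \<le> t" "t \<le> 1"
  shows "(1-t)*p + t*r < (1-t)*q + t* s"
proof (cases "t = 0")
  case True then show ?thesis using assms by simp
next
  case False
  then have "t*r < t* s" using assms by simp
  moreover have "(1-t)*p \<le> (1-t)*q" using assms by (intro mult_left_mono) auto
  ultimately show ?thesis by simp
qed

lemma dich_key:
  fixes f :: "real \<Rightarrow> real"
  assumes cont: "\<forall>x\<in>{a<..<b}. isCont f x" and inj: "inj_on f {a<..<b}"
    and pq: "p \<in> {a<..<b}" "q \<in> {a<..<b}" "p < q" "f p < f q"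
    and rs: "r \<in> {a<..<b}" "s \<in> {a<..<b}" "r < s"
  shows "f r < f s"
proof (rule ccontr)
  assume "\<not> f r < f s"
  moreover have "f r \<noteq> f s" using inj rs inj_on_eq_iff by fastforce
  ultimately have rs': "f s < f r" by simp
  define u where "u t = (1-t)*p + t*r" for t
  define v where "v t = (1-t)*q + t* s" for t
  define phi where "phi t = f (u t) - f (v t)" for t
  have uI: "u t \<in> {a<..<b}" and vI: "v t \<in> {a<..<b}" if "0 \<le> t" "t \<le> 1" for t
    using that pq rs convex_lt[of a p r t] convex_gt[of p b r t] convex_lt[of a q s t] convex_gt[of q b s t]
    by (auto simp: u_def v_def)
  have uv: "u t < v t" if "0 \<le> t" "t \<le> 1" for t
    using convex_lt2[of p q r s t] that pq rs by (simp add: u_def v_def)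
  have "\<forall>t. 0 \<le> t \<and> t \<le> 1 \<longrightarrow> isCont phi t"
  proof (intro allI impI)
    fix t :: real assume t: "0 \<le> t \<and> t \<le> 1"
    have "isCont u t" unfolding u_def by (intro continuous_intros)
    moreover have "isCont v t" unfolding v_def by (intro continuous_intros)
    ultimately have "isCont (\<lambda>t. f (u t)) t" "isCont (\<lambda>t. f (v t)) t"
      using cont uI[of t] vI[of t] t by (auto intro: isCont_o2)
    then show "isCont phi t" unfolding phi_def by (intro continuous_intros)
  qed
  moreover have "phi 0 \<le> 0" "0 \<le> phi 1" using pq rs' by (auto simp: phi_def u_def v_def)
  ultimately obtain t where t: "0 \<le> t" "t \<le> 1" "phi t = 0"
    using IVT[of phi 0 0 1] by auto
  then have "f (u t) = f (v t)" by (simp add: phi_def)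
  then have "u t = v t" using inj uI[OF t(1,2)] vI[OF t(1,2)] inj_on_eq_iff by metis
  then show False using uv[OF t(1,2)] by simp
qed

lemma dich:
  fixes f :: "real \<Rightarrow> real"
  assumes cont: "\<forall>x\<in>{a<..<b}. isCont f x" and inj: "inj_on f {a<..<b}"
  shows "strict_mono_on {a<..<b} f \<or> strict_antimono_on {a<..<b} f"
proof (cases "\<exists>p\<in>{a<..<b}. \<exists>q\<in>{a<..<b}. p < q \<and> f p < f q")
  case True
  then obtain p q where pq: "p \<in> {a<..<b}" "q \<in> {a<..<b}" "p < q" "f p < f q" by blast
  have "strict_mono_on {a<..<b} f"
    by (rule monotone_onI) (use dich_key[OF cont inj pq] in blast)
  then show ?thesis ..
next
  case False
  have "strict_antimono_on {a<..<b} f"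
  proof (rule monotone_onI)
    fix r s assume rs: "r \<in> {a<..<b}" "s \<in> {a<..<b}" "r < s"
    then have "\<not> f r < f s" using False by blast
    moreover have "f r \<noteq> f s" using inj rs inj_on_eq_iff by fastforce
    ultimately show "f s < f r" by simp
  qed
  then show ?thesis ..
qed

lemma ivt_open:
  fixes f :: "real \<Rightarrow> real"
  assumes "\<forall>x. p \<le> x \<and> x \<le> q \<longrightarrow> isCont f x" "f p < y" "y < f q" "p \<le> q"
  shows "\<exists>x. p < x \<and> x < q \<and> f x = y"
proof -
  obtain x where "p \<le> x" "x \<le> q" "f x = y" using IVT[of f p y q] assms by auto
  moreover have "x \<noteq> p" "x \<noteq> q" using assms \<open>f x = y\<close> by auto
  ultimately show ?thesis by force
qed

lemma ivt_open_dec: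
  fixes f :: "real \<Rightarrow> real"
  assumes "\<forall>x. p \<le> x \<and> x \<le> q \<longrightarrow> isCont f x" "f q < y" "y < f p" "p \<le> q"
  shows "\<exists>x. p < x \<and> x < q \<and> f x = y"
proof -
  obtain x where "p \<le> x" "x \<le> q" "f x = y" using IVT2[of f q y p] assms by auto
  moreover have "x \<noteq> p" "x \<noteq> q" using assms \<open>f x = y\<close> by auto
  ultimately show ?thesis by force
qed

lemma pcinc_mono: "pcinc S f \<Longrightarrow> finite T \<Longrightarrow> S \<subseteq> T \<Longrightarrow> pcinc T f"
  unfolding pcinc_def by blast

lemma Ioo_sub_X: "0 \<le> a \<Longrightarrow> b \<le> 1 \<Longrightarrow> {a<..<b} \<subseteq> Xint"
  by (auto simp: Xint_def)

lemma pcinc_transfer: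
  assumes "pcinc S f'" "fin_eq f f'"
  shows "pcinc (S \<union> {x \<in> Xint. f x \<noteq> f' x}) f"
proof -
  have fin: "finite (S \<union> {x \<in> Xint. f x \<noteq> f' x})" using assms by (auto simp: pcinc_def fin_eq_def)
  have "continuous_on {a<..<b} f \<and> strict_mono_on {a<..<b} f"
    if ab: "0 \<le> a" "b \<le> 1" "{a<..<b} \<inter> (S \<union> {x \<in> Xint. f x \<noteq> f' x}) = {}" for a b :: real
  proof -
    have eq: "\<And>x. x \<in> {a<..<b} \<Longrightarrow> f x = f' x" using Ioo_sub_X[OF ab(1,2)] ab(3) by blast
    have "continuous_on {a<..<b} f' \<and> strict_mono_on {a<..<b} f'"
      using assms(1) ab unfolding pcinc_def by blast
    then show ?thesis
      using eq continuous_on_cong[of "{a<..<b}" "{a<..<b}" f f'] 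
      by (auto simp: monotone_on_def)
  qed
  with fin show ?thesis unfolding pcinc_def by blast
qed



lemma find_piece:
  fixes t :: "nat \<Rightarrow> real"
  assumes "t 0 \<le> m" "m < t n"
  shows "\<exists>i<n. t i \<le> m \<and> m < t (Suc i)"
  using assms
proof (induction n)
  case 0 then show ?case by simp
next
  case (Suc n)
  show ?case
  proof (cases "m < t n")
    case True then obtain i where "i<n" "t i \<le> m" "m < t (Suc i)" using Suc by blast
    then show ?thesis by (intro exI[of _ i]) auto
  next
    case False then show ?thesis using Suc.prems by (intro exI[of _ n]) auto
  qed
qed

lemma PCplus_pcinc:
  assumes "f \<in> PCplus_hat"
  shows "bij_betw f Xint Xint \<and> (\<exists>S. pcinc S f)"
proof -
  obtain n t where bij: "bij_betw f Xint Xint" and t: "t 0 = 0" "t n = 1" "\<forall>i<n. t i < t (Suc i)"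
    "\<forall>i<n. continuous_on {t i<..<t (Suc i)} f \<and> strict_mono_on {t i<..<t (Suc i)} f"
    using assms unfolding PCplus_hat_def by blast
  have "continuous_on {a<..<b} f \<and> strict_mono_on {a<..<b} f"
    if ab: "0 \<le> a" "b \<le> 1" "{a<..<b} \<inter> t ` {..n} = {}" for a b :: real
  proof (cases "a < b")
    case False
    then have "{a<..<b} = {}" by auto
    then show ?thesis by (simp add: monotone_on_def)
  next
    case True
    define m where "m = (a + b) / 2"
    have m: "a < m" "m < b" using True by (auto simp: m_def)
    obtain i where i: "i < n" "t i \<le> m" "m < t (Suc i)"
      using find_piece[of t m n] t(1,2) m ab by auto
    have "t i \<le> a"
    proof (rule ccontr)
      assume "\<not> t i \<le> a"
      then have "t i \<in> {a<..<b} \<inter> t ` {..n}" using i m by auto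
      then show False using ab by blast
    qed
    moreover have "b \<le> t (Suc i)"
    proof (rule ccontr)
      assume "\<not> b \<le> t (Suc i)"
      then have "t (Suc i) \<in> {a<..<b} \<inter> t ` {..n}" using i m by auto
      then show False using ab by blast
    qed
    ultimately have sub: "{a<..<b} \<subseteq> {t i<..<t (Suc i)}" by auto
    then show ?thesis using t(4) i(1) continuous_on_subset monotone_on_subset by metis
  qed
  then have "pcinc (t ` {..n}) f" unfolding pcinc_def by blast
  then show ?thesis using bij by blast
qed

lemma pcinc_PCplus:
  assumes bij: "bij_betw f Xint Xint" and pc: "pcinc S f"
  shows "f \<in> PCplus_hat"
proof -
  define A where "A = insert (0::real) (insert 1 (S \<inter> {0<..<1}))"
  have finA: "finite A" using pc by (auto simp: A_def pcinc_def)
  define L where "L = sorted_list_of_set A"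
  have setL: "set L = A" using finA by (simp add: L_def)
  have sL: "sorted_wrt (<) L" by (simp add: L_def strict_sorted_list_of_set)
  have A01: "\<forall>x\<in>A. 0 \<le> x \<and> x \<le> 1" by (auto simp: A_def)
  have strict: "L!i < L!j" if "i < j" "j < length L" for i j
    using sorted_wrt_nth_less[OF sL that] .
  have mono: "L!i \<le> L!j" if "i \<le> j" "j < length L" for i j
    using strict[of i j] that by (cases "i = j") auto
  have Lne: "L \<noteq> []" using setL by (auto simp: A_def)
  define n where "n = length L - 1"
  define t where "t i = L ! i" for i
  have nlt: "n < length L" using Lne by (simp add: n_def)
  have inA: "t i \<in> A" if "i \<le> n" for i using that nlt setL by (auto simp: t_def)
  have t0: "t 0 = 0"
  proof -
    obtain j where j: "j < length L" "L ! j = 0" using setL in_set_conv_nth[of 0 L] by (auto simp: A_def)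
    have "t 0 \<le> 0" using mono[of 0 j] j by (simp add: t_def)
    moreover have "t 0 \<ge> 0" using inA[of 0] A01 by auto
    ultimately show ?thesis by simp
  qed
  have tn: "t n = 1"
  proof -
    obtain j where j: "j < length L" "L ! j = 1" using setL in_set_conv_nth[of 1 L] by (auto simp: A_def)
    have "1 \<le> t n" using mono[of j n] j by (simp add: t_def n_def)
    moreover have "t n \<le> 1" using inA[of n] A01 by auto
    ultimately show ?thesis by simp
  qed
  have tinc: "\<forall>i<n. t i < t (Suc i)" using strict nlt by (auto simp: t_def n_def)
  have "continuous_on {t i<..<t (Suc i)} f \<and> strict_mono_on {t i<..<t (Suc i)} f" if i: "i < n" for i
  proof -
    have a0: "0 \<le> t i" using inA[of i] A01 i by auto
    have b1: "t (Suc i) \<le> 1" using inA[of "Suc i"] A01 i by auto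
    have "{t i<..<t (Suc i)} \<inter> S = {}"
    proof (rule ccontr)
      assume "{t i<..<t (Suc i)} \<inter> S \<noteq> {}"
      then obtain s where s: "s \<in> S" "t i < s" "s < t (Suc i)" by auto
      then have "s \<in> A" using a0 b1 by (auto simp: A_def)
      then obtain j where j: "j < length L" "L ! j = s" using setL in_set_conv_nth[of s L] by auto
      show False
      proof (cases "j \<le> i")
        case True then show False using mono[of j i] s j i nlt by (auto simp: t_def)
      next
        case False then show False using mono[of "Suc i" j] s j by (auto simp: t_def)
      qed
    qed
    then show ?thesis using pc a0 b1 unfolding pcinc_def by blast
  qed
  then show ?thesis unfolding PCplus_hat_def using bij t0 tn tinc by blast
qed

lemma PCplus_iff: "f \<in> PCplus_hat \<longleftrightarrow> bij_betw f Xint Xint \<and> (\<exists>S. pcinc S f)"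
  using PCplus_pcinc pcinc_PCplus by blast



lemma pcincD:
  assumes "pcinc S f" "0 \<le> a" "b \<le> 1" "{a<..<b} \<inter> S = {}"
  shows "continuous_on {a<..<b} f" "strict_mono_on {a<..<b} f"
  using assms unfolding pcinc_def by blast+

lemma isCont_on_Icc:
  fixes f :: "real \<Rightarrow> real"
  assumes "continuous_on {a<..<b} f" "a < p" "q < b"
  shows "\<forall>x. p \<le> x \<and> x \<le> q \<longrightarrow> isCont f x"
proof (intro allI impI)
  fix x assume "p \<le> x \<and> x \<le> q"
  then have "x \<in> {a<..<b}" using assms by auto
  then show "isCont f x" using continuous_on_eq_continuous_at[of "{a<..<b}" f] assms(1)
    by simp
qed

lemma window:
  assumes pk: "pcinc T k" and kX: "k ` Xint \<subseteq> Xint"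
    and ab: "0 \<le> a" "b \<le> 1" "{a<..<b} \<inter> (T \<union> (k -` S \<inter> Xint)) = {}"
    and xy: "a < x'" "x' < y'" "y' < b"
  shows "0 \<le> k x' \<and> k y' \<le> 1 \<and> {k x'<..<k y'} \<inter> S = {} \<and> k x' < k y'"
proof -
  have abT: "{a<..<b} \<inter> T = {}" using ab by blast
  note kc = pcincD(1)[OF pk ab(1,2) abT] and km = pcincD(2)[OF pk ab(1,2) abT]
  have sub: "{a<..<b} \<subseteq> Xint" using Ioo_sub_X ab by blast
  have "x' \<in> Xint" "y' \<in> Xint" using sub xy by auto
  then have "k x' \<in> Xint" "k y' \<in> Xint" using kX by auto
  then have "0 \<le> k x'" "k y' \<le> 1" by (auto simp: Xint_def)
  moreover have lt: "k x' < k y'" using km xy by (auto simp: monotone_on_def)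
  moreover have "{k x'<..<k y'} \<inter> S = {}"
  proof (rule ccontr)
    assume "{k x'<..<k y'} \<inter> S \<noteq> {}"
    then obtain z where z: "z \<in> S" "k x' < z" "z < k y'" by auto
    obtain w where w: "x' < w" "w < y'" "k w = z"
      using ivt_open[of x' y' k z] isCont_on_Icc[OF kc, of x' y'] xy z by auto
    have "w \<in> {a<..<b}" using w xy by auto
    moreover then have "w \<in> k -` S \<inter> Xint" using sub w z by auto
    ultimately show False using ab by blast
  qed
  ultimately show ?thesis by blast
qed

lemma pcinc_comp:
  assumes pf: "pcinc S f" and pk: "pcinc T k" and kX: "k ` Xint \<subseteq> Xint" and kinj: "inj_on k Xint"
  shows "pcinc (T \<union> (k -` S \<inter> Xint)) (f \<circ> k)"
proof -
  have fin: "finite (T \<union> (k -` S \<inter> Xint))"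
    using pf pk kinj by (auto simp: pcinc_def intro: finite_vimage_IntI)
  have "continuous_on {a<..<b} (f \<circ> k) \<and> strict_mono_on {a<..<b} (f \<circ> k)"
    if ab: "0 \<le> a" "b \<le> 1" "{a<..<b} \<inter> (T \<union> (k -` S \<inter> Xint)) = {}" for a b :: real
  proof -
    have abT: "{a<..<b} \<inter> T = {}" using ab by blast
    note kc = pcincD(1)[OF pk ab(1,2) abT] and km = pcincD(2)[OF pk ab(1,2) abT]
    have "isCont (f \<circ> k) x" if x: "x \<in> {a<..<b}" for x
    proof -
      define x' where "x' = (a + x) / 2"
      define y' where "y' = (x + b) / 2"
      have xy: "a < x'" "x' < y'" "y' < b" "x' < x" "x < y'" using x by (auto simp: x'_def y'_def)
      note W = window[OF pk kX ab xy(1-3)]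
      have fc: "continuous_on {k x'<..<k y'} f" using pcincD(1)[OF pf] W by blast
      have "k x' < k x" "k x < k y'" using km xy x by (auto simp: monotone_on_def)
      then have "isCont f (k x)" using fc continuous_on_eq_continuous_at[of "{k x'<..<k y'}" f] by auto
      moreover have "isCont k x" using kc x continuous_on_eq_continuous_at[of "{a<..<b}" k] by auto
      ultimately show ?thesis by (simp add: continuous_at_compose)
    qed
    then have "continuous_on {a<..<b} (f \<circ> k)"
      using continuous_on_eq_continuous_at[of "{a<..<b}" "f \<circ> k"] open_greaterThanLessThan by blast
    moreover have "strict_mono_on {a<..<b} (f \<circ> k)"
    proof (rule monotone_onI)
      fix x y assume xy0: "x \<in> {a<..<b}" "y \<in> {a<..<b}" "x < y"
      define x' where "x' = (a + x) / 2"
      define y' where "y' = (y + b) / 2"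
      have xy: "a < x'" "x' < y'" "y' < b" "x' < x" "y < y'" using xy0 by (auto simp: x'_def y'_def)
      note W = window[OF pk kX ab xy(1-3)]
      have fm: "strict_mono_on {k x'<..<k y'} f" using pcincD(2)[OF pf] W by blast
      have "k x' < k x" "k x < k y" "k y < k y'" using km xy xy0 by (auto simp: monotone_on_def)
      then show "(f \<circ> k) x < (f \<circ> k) y" using fm by (auto simp: monotone_on_def)
    qed
    ultimately show ?thesis by blast
  qed
  with fin show ?thesis unfolding pcinc_def by blast
qed

lemma pcinc_refl:
  assumes pm: "pcinc S m"
  shows "pcinc ((\<lambda>s. 1 - s) ` S) (\<lambda>x. 1 - m (1 - x))"
proof -
  have fin: "finite ((\<lambda>s. 1 - s) ` S)" using pm by (auto simp: pcinc_def)
  have "continuous_on {a<..<b} (\<lambda>x. 1 - m (1 - x)) \<and> strict_mono_on {a<..<b} (\<lambda>x. 1 - m (1 - x))"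
    if ab: "0 \<le> a" "b \<le> 1" "{a<..<b} \<inter> (\<lambda>s. 1 - s) ` S = {}" for a b :: real
  proof -
    have "{1-b<..<1-a} \<inter> S = {}"
    proof (rule ccontr)
      assume "{1-b<..<1-a} \<inter> S \<noteq> {}"
      then obtain s where s: "s \<in> S" "1 - b < s" "s < 1 - a" by auto
      then have "1 - s \<in> {a<..<b} \<inter> (\<lambda>s. 1 - s) ` S" by auto
      then show False using ab by blast
    qed
    moreover have "0 \<le> 1 - b" "1 - a \<le> 1" using ab by auto
    ultimately have mc: "continuous_on {1-b<..<1-a} m" and mm: "strict_mono_on {1-b<..<1-a} m"
      using pcincD[OF pm] by blast+
    have "continuous_on {a<..<b} (\<lambda>x. m (1 - x))"
      by (rule continuous_on_compose2[OF mc]) (auto intro!: continuous_intros)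
    then have "continuous_on {a<..<b} (\<lambda>x. 1 - m (1 - x))" by (intro continuous_intros)
    moreover have "strict_mono_on {a<..<b} (\<lambda>x. 1 - m (1 - x))"
      using mm by (auto simp: monotone_on_def)
    ultimately show ?thesis by blast
  qed
  with fin show ?thesis unfolding pcinc_def by blast
qed

lemma pcinc_inv:
  assumes pk: "pcinc S k" and bij: "bij_betw k Xint Xint"
  shows "pcinc (k ` (insert 0 S \<inter> Xint)) (invX k)"
proof -
  have finS: "finite S" using pk by (simp add: pcinc_def)
  have fin: "finite (k ` (insert 0 S \<inter> Xint))" using finS by auto
  have kX: "\<And>x. x \<in> Xint \<Longrightarrow> k x \<in> Xint" using bij bij_betwE by blast
  have local: "isCont (invX k) y \<and> (\<forall>z. y < z \<longrightarrow> (\<exists>w. y < w \<and> w < z \<and> invX k y < invX k w))"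
    if y: "y \<in> Xint" "y \<notin> k ` (insert 0 S \<inter> Xint)" for y
  proof -
    define x where "x = invX k y"
    have xX: "x \<in> Xint" and kx: "k x = y" using invX_in f_invX bij y by (auto simp: x_def)
    have "x \<notin> S" "x \<noteq> 0" using y xX kx by auto
    then have x01: "0 < x" "x < 1" "x \<notin> S" using xX by (auto simp: Xint_def)
    obtain e where e: "e > 0" "0 \<le> x - e" "x + e \<le> 1" "{x-e<..<x+e} \<inter> S = {}"
      using avoid_nbhd[OF finS x01(3,1,2)] by blast
    note kc = pcincD(1)[OF pk e(2,3,4)] and km = pcincD(2)[OF pk e(2,3,4)]
    define p where "p = x - e/2"
    define q where "q = x + e/2"
    have pq: "x - e < p" "p < x" "x < q" "q < x + e" using e by (auto simp: p_def q_def)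
    have pqX: "{p..q} \<subseteq> Xint" using pq e by (auto simp: Xint_def)
    have "{p..q} \<subseteq> {x-e<..<x+e}" using pq by auto
    note ckpq = continuous_on_subset[OF kc this]
    have cinv: "continuous_on (k ` {p..q}) (invX k)"
      by (rule continuous_on_inv[OF ckpq]) (use pqX invX_f[OF bij] in auto)
    have kpq: "k p < y" "y < k q" using km pq kx by (auto simp: monotone_on_def)
    have isc: "\<forall>z. p \<le> z \<and> z \<le> q \<longrightarrow> isCont k z" using isCont_on_Icc[OF kc] pq by auto
    have sub: "{k p<..<k q} \<subseteq> k ` {p<..<q}"
    proof
      fix w assume "w \<in> {k p<..<k q}"
      then obtain u where "p < u" "u < q" "k u = w" using ivt_open[OF isc] pq by auto
      then show "w \<in> k ` {p<..<q}" by auto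
    qed
    have "{k p<..<k q} \<subseteq> k ` {p..q}" using sub by auto
    then have "continuous_on {k p<..<k q} (invX k)"
      by (rule continuous_on_subset[OF cinv])
    then have c: "isCont (invX k) y" using kpq continuous_on_eq_continuous_at[of "{k p<..<k q}" "invX k"] by auto
    have "\<exists>w. y < w \<and> w < z \<and> invX k y < invX k w" if z: "y < z" for z
    proof -
      define w where "w = (y + min z (k q)) / 2"
      have w: "y < w" "w < z" "w < k q" using z kpq by (auto simp: w_def)
      then have "w \<in> {k p<..<k q}" using kpq by auto
      then have "w \<in> k ` {p<..<q}" using sub by blast
      then obtain u where u: "p < u" "u < q" "k u = w" by auto
      have "x < u"
      proof (rule ccontr)
        assume "\<not> x < u"
        moreover have "u \<noteq> x" using u w kx by auto
        ultimately have "u < x" by simp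
        then have "k u < k x" using u pq by (intro monotone_onD[OF km]) auto
        then have "k u \<le> k x" by simp
        then show False using u w kx by simp
      qed
      moreover have "u \<in> Xint" using u pqX by auto
      then have "invX k w = u" using u invX_f[OF bij, of u] by auto
      ultimately show ?thesis using w x_def by auto
    qed
    then show ?thesis using c by blast
  qed
  have "continuous_on {c<..<d} (invX k) \<and> strict_mono_on {c<..<d} (invX k)"
    if cd: "0 \<le> c" "d \<le> 1" "{c<..<d} \<inter> k ` (insert 0 S \<inter> Xint) = {}" for c d :: real
  proof -
    have subX: "{c<..<d} \<subseteq> Xint" using Ioo_sub_X cd by blast
    have isc: "\<forall>y\<in>{c<..<d}. isCont (invX k) y" using local subX cd by blast
    then have cont: "continuous_on {c<..<d} (invX k)"
      using continuous_on_eq_continuous_at[of "{c<..<d}" "invX k"] by auto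
    have "strict_mono_on {c<..<d} (invX k)"
    proof (cases "c < d")
      case False then have "{c<..<d} = {}" by auto
      then show ?thesis by (simp add: monotone_on_def)
    next
      case True
      have inj: "inj_on (invX k) {c<..<d}"
        using invX_bij[OF bij] subX by (meson bij_betw_def inj_on_subset)
      define y where "y = (c + d) / 2"
      have yI: "y \<in> {c<..<d}" using True by (auto simp: y_def)
      have yX: "y \<in> Xint" using yI subX by auto
      have yn: "y \<notin> k ` (insert 0 S \<inter> Xint)" using yI cd by auto
      have "\<forall>z. y < z \<longrightarrow> (\<exists>w. y < w \<and> w < z \<and> invX k y < invX k w)"
        using local[OF yX yn] by blast
      then obtain w where w: "y < w" "w < d" "invX k y < invX k w"
        using yI by auto
      have wI: "w \<in> {c<..<d}" using w yI by auto
      have "\<not> strict_antimono_on {c<..<d} (invX k)"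
      proof
        assume am: "strict_antimono_on {c<..<d} (invX k)"
        have "invX k w < invX k y" using monotone_onD[OF am yI wI] w by simp
        then show False using w by simp
      qed
      then show ?thesis using dich[OF isc inj] by blast
    qed
    with cont show ?thesis by blast
  qed
  with fin show ?thesis unfolding pcinc_def by blast
qed



lemma PC_bij: "f \<in> PCplus_hat \<Longrightarrow> bij_betw f Xint Xint"
  by (simp add: PCplus_iff)

lemma PC_comp:
  assumes "f \<in> PCplus_hat" "k \<in> PCplus_hat"
  shows "f \<circ> k \<in> PCplus_hat"
proof -
  obtain S T where S: "pcinc S f" and T: "pcinc T k" and bf: "bij_betw f Xint Xint"
    and bk: "bij_betw k Xint Xint" using assms by (auto simp: PCplus_iff)
  have "pcinc (T \<union> (k -` S \<inter> Xint)) (f \<circ> k)"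
    using pcinc_comp[OF S T] bk by (auto simp: bij_betw_def)
  moreover have "bij_betw (f \<circ> k) Xint Xint" using bf bk bij_betw_trans by blast
  ultimately show ?thesis by (auto simp: PCplus_iff)
qed

lemma PC_inv:
  assumes "k \<in> PCplus_hat"
  shows "invX k \<in> PCplus_hat"
proof -
  obtain T where T: "pcinc T k" and bk: "bij_betw k Xint Xint" using assms by (auto simp: PCplus_iff)
  show ?thesis using pcinc_inv[OF T bk] invX_bij[OF bk] by (auto simp: PCplus_iff)
qed

lemma in_PCplus_bij:
  assumes "in_PCplus f" "bij_betw f Xint Xint"
  shows "f \<in> PCplus_hat"
proof -
  obtain h where h: "h \<in> PCplus_hat" "fin_eq f h" using assms by (auto simp: in_PCplus_def)
  obtain S where "pcinc S h" using h by (auto simp: PCplus_iff)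
  then have "pcinc (S \<union> {x \<in> Xint. f x \<noteq> h x}) f" using pcinc_transfer h by blast
  then show ?thesis using assms by (auto simp: PCplus_iff)
qed

lemma in_PCplusI: "fin_eq f h \<Longrightarrow> h \<in> PCplus_hat \<Longrightarrow> in_PCplus f"
  unfolding in_PCplus_def by blast

lemma r0_X: "x \<in> Xint \<Longrightarrow> r0 x \<in> Xint"
  by (auto simp: r0_def Xint_def)

lemma r0_r0: "x \<in> Xint \<Longrightarrow> r0 (r0 x) = x"
  by (auto simp: r0_def Xint_def)

lemma r0_bij: "bij_betw r0 Xint Xint"
  by (rule bij_betwI[of r0 Xint Xint r0]) (auto simp: r0_X r0_r0)

lemma invX_r0: "y \<in> Xint \<Longrightarrow> invX r0 y = r0 y"
  using invX_f[OF r0_bij, of "r0 y"] r0_r0 r0_X by simp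

lemma r0_fin: "fin_eq r0 (\<lambda>x. 1 - x)"
proof -
  have "{x \<in> Xint. r0 x \<noteq> 1 - x} \<subseteq> {0}" by (auto simp: r0_def)
  then show ?thesis unfolding fin_eq_def by (rule finite_subset) simp
qed

lemma r0_bowtie: "r0 \<in> PCbowtie_hat"
proof -
  have "continuous_on {0<..<1} r0"
  proof -
    have "continuous_on {0<..<(1::real)} (\<lambda>x. 1 - x)" by (intro continuous_intros)
    moreover have "\<And>x. x \<in> {0<..<(1::real)} \<Longrightarrow> r0 x = 1 - x" by (auto simp: r0_def)
    ultimately show ?thesis using continuous_on_cong by (metis (no_types, lifting))
  qed
  then have "\<forall>x \<in> Xint - {0}. continuous (at x within Xint) r0"
    using continuous_on_eq_continuous_at[of "{0<..<1::real}" r0]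
    by (auto simp: Xint_def intro: continuous_at_imp_continuous_at_within)
  then show ?thesis unfolding PCbowtie_hat_def using r0_bij by blast
qed

lemma PC_conj_r0:
  assumes "m \<in> PCplus_hat"
  shows "r0 \<circ> m \<circ> r0 \<in> PCplus_hat"
proof -
  obtain S where S: "pcinc S m" and bm: "bij_betw m Xint Xint" using assms by (auto simp: PCplus_iff)
  have b: "bij_betw (r0 \<circ> m \<circ> r0) Xint Xint" using bm r0_bij bij_betw_trans by blast
  have "{x \<in> Xint. (r0 \<circ> m \<circ> r0) x \<noteq> 1 - m (1 - x)} \<subseteq> {0} \<union> (r0 -` (m -` {0} \<inter> Xint) \<inter> Xint)"
  proof
    fix x assume x: "x \<in> {x \<in> Xint. (r0 \<circ> m \<circ> r0) x \<noteq> 1 - m (1 - x)}"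
    show "x \<in> {0} \<union> (r0 -` (m -` {0} \<inter> Xint) \<inter> Xint)"
    proof (cases "x = 0")
      case False
      then have "r0 x = 1 - x" by (simp add: r0_def)
      then have "m (r0 x) = 0" using x by (auto simp: r0_def split: if_splits)
      moreover have "r0 x \<in> Xint" using x r0_X by auto
      ultimately show ?thesis using x by auto
    qed simp
  qed
  moreover have "finite (r0 -` (m -` {0} \<inter> Xint) \<inter> Xint)"
    using bm r0_bij by (intro finite_vimage_IntI) (auto simp: bij_betw_def)
  ultimately have fe: "fin_eq (r0 \<circ> m \<circ> r0) (\<lambda>x. 1 - m (1 - x))"
    unfolding fin_eq_def by (meson finite.insertI finite.emptyI finite_UnI finite_subset)
  have "pcinc ((\<lambda>s. 1 - s) ` S) (\<lambda>x. 1 - m (1 - x))" by (rule pcinc_refl[OF S])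
  from pcinc_transfer[OF this fe] b show ?thesis by (auto simp: PCplus_iff)
qed



lemma bij_inj: "bij_betw f Xint Xint \<Longrightarrow> inj_on f Xint"
  by (simp add: bij_betw_def)
lemma bij_img: "bij_betw f Xint Xint \<Longrightarrow> f ` Xint \<subseteq> Xint"
  by (simp add: bij_betw_def)

lemma dir1:
  assumes g: "g \<in> PCbowtie_hat" and pm: "in_PCpm g"
  shows "normalizes_PCplus g"
proof -
  have gb: "bij_betw g Xint Xint" using g by (simp add: PCbowtie_hat_def)
  show ?thesis
  proof (cases "in_PCplus g")
    case True
    then have gP: "g \<in> PCplus_hat" using in_PCplus_bij gb by blast
    show ?thesis unfolding normalizes_PCplus_def
    proof (intro ballI conjI)
      fix h assume h: "h \<in> PCplus_hat"
      show "in_PCplus (g \<circ> h \<circ> invX g)"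
        using PC_comp[OF PC_comp[OF gP h] PC_inv[OF gP]] in_PCplusI fin_eq_refl by blast
      show "in_PCplus (invX g \<circ> h \<circ> g)"
        using PC_comp[OF PC_comp[OF PC_inv[OF gP] h] gP] in_PCplusI fin_eq_refl by blast
    qed
  next
    case False
    then have "in_PCminus g" using pm by (simp add: in_PCpm_def)
    then obtain r h0 where r: "r \<in> PCbowtie_hat" and h0: "h0 \<in> PCplus_hat"
      and rf: "fin_eq r (\<lambda>x. 1 - x)" and gr: "fin_eq g (r \<circ> h0)"
      unfolding in_PCminus_def by blast
    have h0b: "bij_betw h0 Xint Xint" using PC_bij[OF h0] .
    have rr0: "fin_eq r r0" using rf r0_fin fin_eq_sym fin_eq_trans by blast
    define g' where "g' = r0 \<circ> h0"
    have g'b: "bij_betw g' Xint Xint" unfolding g'_def using h0b r0_bij bij_betw_trans by blast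
    have gg': "fin_eq g g'" unfolding g'_def
      using fin_eq_trans[OF gr fin_eq_comp[OF rr0 fin_eq_refl bij_inj[OF h0b] bij_img[OF h0b]]] .
    have ig: "fin_eq (invX g) (invX g')" using fin_eq_invX[OF gb g'b gg'] .
    have ig'b: "bij_betw (invX g') Xint Xint" using invX_bij[OF g'b] .
    have ig'_eq: "invX (r0 \<circ> h0) y = invX h0 (r0 y)" if "y \<in> Xint" for y
      using invX_comp[OF r0_bij h0b that] invX_r0[OF that] by simp
    show ?thesis unfolding normalizes_PCplus_def
    proof (intro ballI conjI)
      fix h assume h: "h \<in> PCplus_hat"
      have hb: "bij_betw h Xint Xint" using PC_bij[OF h] .
      have e1: "fin_eq (g \<circ> h \<circ> invX g) (g' \<circ> h \<circ> invX g')"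
        by (rule fin_eq_comp[OF fin_eq_comp[OF gg' fin_eq_refl bij_inj[OF hb] bij_img[OF hb]] ig
              bij_inj[OF ig'b] bij_img[OF ig'b]])
      have e2: "fin_eq (g' \<circ> h \<circ> invX g') (r0 \<circ> (h0 \<circ> h \<circ> invX h0) \<circ> r0)"
        by (rule fin_eq_onX) (simp add: ig'_eq g'_def)
      have e3: "r0 \<circ> (h0 \<circ> h \<circ> invX h0) \<circ> r0 \<in> PCplus_hat"
        by (rule PC_conj_r0[OF PC_comp[OF PC_comp[OF h0 h] PC_inv[OF h0]]])
      show "in_PCplus (g \<circ> h \<circ> invX g)" by (rule in_PCplusI[OF fin_eq_trans[OF e1 e2] e3])
      have e4: "fin_eq (invX g \<circ> h \<circ> g) (invX g' \<circ> h \<circ> g')"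
        by (rule fin_eq_comp[OF fin_eq_comp[OF ig fin_eq_refl bij_inj[OF hb] bij_img[OF hb]] gg'
              bij_inj[OF g'b] bij_img[OF g'b]])
      have e5: "fin_eq (invX g' \<circ> h \<circ> g') (invX h0 \<circ> (r0 \<circ> h \<circ> r0) \<circ> h0)"
      proof (rule fin_eq_onX)
        fix x assume x: "x \<in> Xint"
        have "g' x \<in> Xint" using bij_betwE[OF g'b] x by blast
        then have "h (g' x) \<in> Xint" using bij_betwE[OF hb] by blast
        then show "(invX g' \<circ> h \<circ> g') x = (invX h0 \<circ> (r0 \<circ> h \<circ> r0) \<circ> h0) x"
          using ig'_eq by (simp add: g'_def)
      qed
      have e6: "invX h0 \<circ> (r0 \<circ> h \<circ> r0) \<circ> h0 \<in> PCplus_hat"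
        by (rule PC_comp[OF PC_comp[OF PC_inv[OF h0] PC_conj_r0[OF h]] h0])
      show "in_PCplus (invX g \<circ> h \<circ> g)" by (rule in_PCplusI[OF fin_eq_trans[OF e4 e5] e6])
    qed
  qed
qed



lemma interval_cases:
  fixes a b p q :: real
  assumes "p \<notin> {a<..<b}" "q \<notin> {a<..<b}"
  shows "{a<..<b} \<subseteq> {p<..<q} \<or> {a<..<b} \<inter> {p<..<q} = {}"
proof (rule ccontr)
  assume "\<not> ?thesis"
  then obtain x y where x: "x \<in> {a<..<b}" "x \<notin> {p<..<q}" and y: "y \<in> {a<..<b}" "y \<in> {p<..<q}" by blast
  show False
  proof (cases "x \<le> p")
    case True then have "p \<in> {a<..<b}" using x y by auto
    then show False using assms by blast
  next
    case False then have "q \<le> x" using x by auto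
    then have "q \<in> {a<..<b}" using x y by auto
    then show False using assms by blast
  qed
qed

lemma lin_piece:
  fixes h :: "real \<Rightarrow> real"
  assumes "\<And>x. x \<in> {a<..<b} \<Longrightarrow> h x = x + c"
  shows "continuous_on {a<..<b} h \<and> strict_mono_on {a<..<b} h"
proof
  have "continuous_on {a<..<b} (\<lambda>x. x + c)" by (intro continuous_intros)
  then show "continuous_on {a<..<b} h" using assms continuous_on_cong by (metis (no_types, lifting))
  show "strict_mono_on {a<..<b} h" using assms by (auto simp: monotone_on_def)
qed

definition swapf :: "real \<Rightarrow> real \<Rightarrow> real \<Rightarrow> real \<Rightarrow> real" where
 "swapf a1 a2 d x = (if a2 < x \<and> x < a2 + d then x + (a1 - a2)
    else if a1 < x \<and> x < a1 + d then x - (a1 - a2) else x)"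

lemma swap_PC:
  assumes "0 \<le> a1" "a1 + d \<le> 1" "0 \<le> a2" "a2 + d \<le> 1" "d > 0" "d \<le> \<bar>a1 - a2\<bar>"
  shows "swapf a1 a2 d \<in> PCplus_hat"
proof -
  let ?h = "swapf a1 a2 d"
  have disj: "\<not> (a1 < x \<and> x < a1 + d)" if "a2 < x" "x < a2 + d" for x
    using that assms(6) by (cases "a1 < a2") auto
  have hX: "?h x \<in> Xint" if "x \<in> Xint" for x
    using that assms by (auto simp: swapf_def Xint_def)
  have sw1: "?h y = y + (a1 - a2)" if "a2 < y \<and> y < a2 + d" for y
    using that by (simp add: swapf_def)
  have sw2: "?h y = y - (a1 - a2)" if "\<not> (a2 < y \<and> y < a2 + d)" "a1 < y \<and> y < a1 + d" for y
    using that unfolding swapf_def by (simp only: if_False if_True simp_thms)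
  have sw3: "?h y = y" if "\<not> (a2 < y \<and> y < a2 + d)" "\<not> (a1 < y \<and> y < a1 + d)" for y
    using that unfolding swapf_def by (simp only: if_False if_True simp_thms)
  have hh: "?h (?h x) = x" for x
  proof (cases "a2 < x \<and> x < a2 + d")
    case True
    have in1: "a1 < x + (a1 - a2) \<and> x + (a1 - a2) < a1 + d" using True by auto
    have n2: "\<not> (a2 < x + (a1 - a2) \<and> x + (a1 - a2) < a2 + d)" using disj[of "x + (a1-a2)"] in1 by blast
    show ?thesis using sw1[OF True] sw2[OF n2 in1] by simp
  next
    case F: False
    show ?thesis
    proof (cases "a1 < x \<and> x < a1 + d")
      case True
      have "a2 < x - (a1 - a2) \<and> x - (a1 - a2) < a2 + d" using True by auto
      then show ?thesis using sw2[OF F True] sw1 by simp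
    next
      case False
      then show ?thesis using sw3[OF F False] by simp
    qed
  qed
  have bij: "bij_betw ?h Xint Xint"
    by (rule bij_betwI[of ?h Xint Xint ?h]) (auto simp: hX hh)
  have "continuous_on {a<..<b} ?h \<and> strict_mono_on {a<..<b} ?h"
    if ab: "0 \<le> a" "b \<le> 1" "{a<..<b} \<inter> {a1, a1 + d, a2, a2 + d} = {}" for a b
  proof -
    have c1: "{a<..<b} \<subseteq> {a1<..<a1+d} \<or> {a<..<b} \<inter> {a1<..<a1+d} = {}"
      using ab(3) by (intro interval_cases) auto
    have c2: "{a<..<b} \<subseteq> {a2<..<a2+d} \<or> {a<..<b} \<inter> {a2<..<a2+d} = {}"
      using ab(3) by (intro interval_cases) auto
    show ?thesis
    proof (cases "{a<..<b} \<subseteq> {a2<..<a2+d}")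
      case True
      then show ?thesis by (intro lin_piece[of a b ?h "a1 - a2"]) (auto simp: swapf_def)
    next
      case False
      then have n2: "{a<..<b} \<inter> {a2<..<a2+d} = {}" using c2 by blast
      show ?thesis
      proof (cases "{a<..<b} \<subseteq> {a1<..<a1+d}")
        case True
        have "?h x = x + (-(a1 - a2))" if "x \<in> {a<..<b}" for x
        proof -
          have "x \<notin> {a2<..<a2+d}" using n2 that by blast
          then show ?thesis using True that by (auto simp: swapf_def)
        qed
        then show ?thesis by (rule lin_piece)
      next
        case False
        then have n1: "{a<..<b} \<inter> {a1<..<a1+d} = {}" using c1 by blast
        have "?h x = x + 0" if "x \<in> {a<..<b}" for x
        proof -
          have "x \<notin> {a2<..<a2+d}" "x \<notin> {a1<..<a1+d}" using n1 n2 that by blast+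
          then show ?thesis by (auto simp: swapf_def)
        qed
        then show ?thesis by (rule lin_piece)
      qed
    qed
  qed
  then have "pcinc {a1, a1 + d, a2, a2 + d} ?h" unfolding pcinc_def by auto
  then show ?thesis using bij by (auto simp: PCplus_iff)
qed

lemma window2:
  assumes kc: "continuous_on {a<..<b} k" and km: "strict_mono_on {a<..<b} k" and kX: "k ` Xint \<subseteq> Xint"
    and ab: "0 \<le> a" "b \<le> 1" "{a<..<b} \<inter> (k -` S \<inter> Xint) = {}"
    and xy: "a < x'" "x' < y'" "y' < b"
  shows "0 \<le> k x' \<and> k y' \<le> 1 \<and> {k x'<..<k y'} \<inter> S = {} \<and> k x' < k y'"
proof -
  have sub: "{a<..<b} \<subseteq> Xint" using Ioo_sub_X ab by blast
  have "x' \<in> Xint" "y' \<in> Xint" using sub xy by auto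
  then have "k x' \<in> Xint" "k y' \<in> Xint" using kX by auto
  then have "0 \<le> k x'" "k y' \<le> 1" by (auto simp: Xint_def)
  moreover have lt: "k x' < k y'" using km xy by (auto simp: monotone_on_def)
  moreover have "{k x'<..<k y'} \<inter> S = {}"
  proof (rule ccontr)
    assume "{k x'<..<k y'} \<inter> S \<noteq> {}"
    then obtain z where z: "z \<in> S" "k x' < z" "z < k y'" by auto
    obtain w where w: "x' < w" "w < y'" "k w = z"
      using ivt_open[of x' y' k z] isCont_on_Icc[OF kc, of x' y'] xy z by auto
    have "w \<in> {a<..<b}" using w xy by auto
    moreover then have "w \<in> k -` S \<inter> Xint" using sub w z by auto
    ultimately show False using ab by blast
  qed
  ultimately show ?thesis by blast
qed

lemma at_within_X: "0 < x \<Longrightarrow> x < 1 \<Longrightarrow> at x within Xint = at x"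
  by (rule at_within_open_subset[of x "{0<..<1}"]) (auto simp: Xint_def)



lemma dir2:
  assumes g: "g \<in> PCbowtie_hat" and nz: "normalizes_PCplus g"
  shows "in_PCpm g"
proof -
  obtain F where gb: "bij_betw g Xint Xint" and F: "finite F"
    and gc: "\<forall>x\<in>Xint - F. continuous (at x within Xint) g"
    using g unfolding PCbowtie_hat_def by blast
  have gX: "\<And>x. x \<in> Xint \<Longrightarrow> g x \<in> Xint" using bij_betwE[OF gb] by blast
  have gXs: "g ` Xint \<subseteq> Xint" using gX by blast
  have ginj: "inj_on g Xint" using gb by (simp add: bij_betw_def)
  have piece: "(\<forall>x\<in>{a<..<b}. isCont g x) \<and> (strict_mono_on {a<..<b} g \<or> strict_antimono_on {a<..<b} g)"
    if ab: "0 \<le> a" "b \<le> 1" "{a<..<b} \<inter> F = {}" for a b :: real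
  proof -
    have ic: "\<forall>x\<in>{a<..<b}. isCont g x"
    proof
      fix x assume x: "x \<in> {a<..<b}"
      then have "x \<in> Xint - F" "0 < x" "x < 1" using ab by (auto simp: Xint_def)
      then show "isCont g x" using gc at_within_X by metis
    qed
    moreover have "inj_on g {a<..<b}" using ginj Ioo_sub_X[OF ab(1,2)] inj_on_subset by blast
    ultimately show ?thesis using dich by blast
  qed
  have cont_on: "continuous_on {a<..<b} g" if "0 \<le> a" "b \<le> 1" "{a<..<b} \<inter> F = {}" for a b :: real
    using piece[OF that] continuous_on_eq_continuous_at[of "{a<..<b}" g] by simp
  show ?thesis
  proof (cases "\<forall>a b. 0 \<le> a \<longrightarrow> b \<le> 1 \<longrightarrow> {a<..<b} \<inter> F = {} \<longrightarrow> strict_mono_on {a<..<b} g")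
    case True
    then have "pcinc F g" using F cont_on unfolding pcinc_def by blast
    then have "g \<in> PCplus_hat" using gb by (auto simp: PCplus_iff)
    then show ?thesis unfolding in_PCpm_def using in_PCplusI fin_eq_refl by blast
  next
    case notinc: False
    then obtain a1 b1 where ab1: "0 \<le> a1" "b1 \<le> 1" "{a1<..<b1} \<inter> F = {}"
      "\<not> strict_mono_on {a1<..<b1} g" by blast
    have dec1: "strict_antimono_on {a1<..<b1} g" using piece[OF ab1(1-3)] ab1(4) by blast
    have lt1: "a1 < b1"
    proof (rule ccontr)
      assume "\<not> a1 < b1" then have "{a1<..<b1} = {}" by auto
      then show False using ab1(4) by (simp add: monotone_on_def)
    qed
    show ?thesis
    proof (cases "\<forall>a b. 0 \<le> a \<longrightarrow> b \<le> 1 \<longrightarrow> {a<..<b} \<inter> F = {} \<longrightarrow> strict_antimono_on {a<..<b} g")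
      case True
      define m where "m = (\<lambda>x. 1 - g x)"
      have "continuous_on {a<..<b} m \<and> strict_mono_on {a<..<b} m"
        if ab: "0 \<le> a" "b \<le> 1" "{a<..<b} \<inter> F = {}" for a b :: real
      proof
        show "continuous_on {a<..<b} m" unfolding m_def using cont_on[OF ab] by (intro continuous_intros)
        have "strict_antimono_on {a<..<b} g" using True ab by blast
        then show "strict_mono_on {a<..<b} m" by (auto simp: monotone_on_def m_def)
      qed
      then have pm: "pcinc F m" using F unfolding pcinc_def by blast
      have "{x \<in> Xint. (r0 \<circ> g) x \<noteq> m x} \<subseteq> g -` {0} \<inter> Xint" by (auto simp: r0_def m_def)
      moreover have "finite (g -` {0} \<inter> Xint)" using ginj by (intro finite_vimage_IntI) auto
      ultimately have fe: "fin_eq (r0 \<circ> g) m" unfolding fin_eq_def by (rule finite_subset)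
      have b: "bij_betw (r0 \<circ> g) Xint Xint" using gb r0_bij bij_betw_trans by blast
      have hP: "r0 \<circ> g \<in> PCplus_hat" using pcinc_transfer[OF pm fe] b by (auto simp: PCplus_iff)
      have "fin_eq g (r0 \<circ> (r0 \<circ> g))" by (rule fin_eq_onX) (simp add: r0_r0 gX)
      then have "in_PCminus g" unfolding in_PCminus_def using r0_bowtie hP r0_fin by blast
      then show ?thesis by (simp add: in_PCpm_def)
    next
      case False
      then obtain a2 b2 where ab2: "0 \<le> a2" "b2 \<le> 1" "{a2<..<b2} \<inter> F = {}"
        "\<not> strict_antimono_on {a2<..<b2} g" by blast
      have inc2: "strict_mono_on {a2<..<b2} g" using piece[OF ab2(1-3)] ab2(4) by blast
      have lt2: "a2 < b2"
      proof (rule ccontr)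
        assume "\<not> a2 < b2" then have "{a2<..<b2} = {}" by auto
        then show False using ab2(4) by (simp add: monotone_on_def)
      qed
      have ne: "a1 \<noteq> a2"
      proof
        assume eq: "a1 = a2"
        define p where "p = a1 + (min b1 b2 - a1) / 3"
        define q where "q = a1 + 2 * (min b1 b2 - a1) / 3"
        have pq: "p \<in> {a1<..<b1}" "q \<in> {a1<..<b1}" "p \<in> {a2<..<b2}" "q \<in> {a2<..<b2}" "p < q"
          using lt1 lt2 eq by (auto simp: p_def q_def min_def field_simps)
        have "g p < g q" using monotone_onD[OF inc2 pq(3,4,5)] .
        moreover have "g q < g p" using monotone_onD[OF dec1 pq(1,2,5)] .
        ultimately show False by simp
      qed
      define c where "c = a1 - a2"
      define d where "d = min (b2 - a2) (min (b1 - a1) \<bar>c\<bar>)"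
      have d: "d > 0" "d \<le> b2 - a2" "d \<le> b1 - a1" "d \<le> \<bar>c\<bar>"
        using lt1 lt2 ne by (auto simp: d_def c_def)
      define h where "h = swapf a1 a2 d"
      have hP: "h \<in> PCplus_hat" unfolding h_def
        using d ab1 ab2 by (intro swap_PC) (auto simp: c_def)
      have hx: "h x = x + c" if "a2 < x" "x < a2 + d" for x
        using that by (simp add: swapf_def c_def h_def)
      have "in_PCplus (g \<circ> h \<circ> invX g)" using nz hP unfolding normalizes_PCplus_def by blast
      then obtain k where kP: "k \<in> PCplus_hat" and fe: "fin_eq (g \<circ> h \<circ> invX g) k"
        unfolding in_PCplus_def by blast
      obtain Sk where Sk: "pcinc Sk k" using kP by (auto simp: PCplus_iff)
      define E where "E = {y \<in> Xint. (g \<circ> h \<circ> invX g) y \<noteq> k y}"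
      have finE: "finite E" using fe by (simp add: fin_eq_def E_def)
      define B where "B = g -` (E \<union> Sk) \<inter> Xint"
      have finB: "finite B" unfolding B_def using finE Sk ginj
        by (intro finite_vimage_IntI) (auto simp: pcinc_def)
      obtain p q where pq: "a2 \<le> p" "p < q" "q \<le> a2 + d" "{p<..<q} \<inter> B = {}"
        using avoid_subint[OF finB, of a2 "a2 + d"] d by auto
      define x0 where "x0 = p + (q - p) / 5"
      define x1 where "x1 = p + 2 * (q - p) / 5"
      define x2 where "x2 = p + 3 * (q - p) / 5"
      define x3 where "x3 = p + 4 * (q - p) / 5"
      have xs: "p < x0" "x0 < x1" "x1 < x2" "x2 < x3" "x3 < q"
        using pq(2) by (auto simp: x0_def x1_def x2_def x3_def field_simps)
      have subI2: "{p<..<q} \<subseteq> {a2<..<b2}" using pq d by auto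
      have gcpq: "continuous_on {p<..<q} g" using cont_on[OF ab2(1-3)] subI2 continuous_on_subset by blast
      have gmpq: "strict_mono_on {p<..<q} g" using inc2 subI2 monotone_on_subset by blast
      have p0: "0 \<le> p" using pq ab2 by auto
      have q1: "q \<le> 1" using pq d ab2 by auto
      have avoidS: "{p<..<q} \<inter> (g -` Sk \<inter> Xint) = {}" using pq(4) by (auto simp: B_def)
      have W: "0 \<le> g x0 \<and> g x3 \<le> 1 \<and> {g x0<..<g x3} \<inter> Sk = {} \<and> g x0 < g x3"
        using window2[OF gcpq gmpq gXs p0 q1 avoidS, of x0 x3] xs by auto
      have km: "strict_mono_on {g x0<..<g x3} k" using pcincD(2)[OF Sk] W by blast
      have xin: "x0 \<in> {p<..<q}" "x1 \<in> {p<..<q}" "x2 \<in> {p<..<q}" "x3 \<in> {p<..<q}" using xs by auto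
      have g01: "g x0 < g x1" using monotone_onD[OF gmpq xin(1,2)] xs by simp
      have g12: "g x1 < g x2" using monotone_onD[OF gmpq xin(2,3)] xs by simp
      have g23: "g x2 < g x3" using monotone_onD[OF gmpq xin(3,4)] xs by simp
      have "k (g x1) < k (g x2)"
        using monotone_onD[OF km, of "g x1" "g x2"] g01 g12 g23 by simp
      moreover have kval: "k (g x) = g (x + c)" if x: "x \<in> {p<..<q}" for x
      proof -
        have xX: "x \<in> Xint" using x p0 q1 by (auto simp: Xint_def)
        have "x \<notin> B" using x pq(4) by blast
        then have "g x \<notin> E" using xX by (auto simp: B_def)
        then have "k (g x) = g (h (invX g (g x)))" using gX[OF xX] by (auto simp: E_def)
        also have "\<dots> = g (h x)" using invX_f[OF gb xX] by simp
        also have "\<dots> = g (x + c)" using hx[of x] x pq by simp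
        finally show ?thesis .
      qed
      moreover have "g (x2 + c) < g (x1 + c)"
      proof -
        have "x1 + c \<in> {a1<..<b1}" "x2 + c \<in> {a1<..<b1}" using xin pq d by (auto simp: c_def)
        then show ?thesis using monotone_onD[OF dec1] xs by simp
      qed
      ultimately show ?thesis using kval[OF xin(2)] kval[OF xin(3)] by simp
    qed
  qed
qed

theorem proposition5p2:
  assumes "g \<in> PCbowtie_hat"
  shows "normalizes_PCplus g \<longleftrightarrow> in_PCpm g"
  using dir1[OF assms] dir2[OF assms] by blast



end
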